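(* Let $\lambda$ be a nonzero real number and let $n,r$ be positive integers. Then $$H_{n,\lambda}^{(r)}=\frac{1}{n!}\sum_{k=1}^{n}(-1)^{n-k}\langle r\rangle_{k-1,\lambda}\,k\,S_{1,\lambda}(n,k).$$ In particular, for $r=1$, $$H_{n,\lambda}=\frac{1}{n!}\sum_{k=1}^{n}(-1)^{n-k}k\,\langle 1\rangle_{k-1,\lambda}S_{1,\lambda}(n,k).$$
   Context: For real $x$ and integer $k\ge0$: $(x)_{0,\lambda}=1$, $(x)_{k,\lambda}=x(x-\lambda)\cdots(x-(k-1)\lambda)$; $\langle x\rangle_{0,\lambda}=1$, $\langle x\rangle_{k,\lambda}=x(x+\lambda)\cdots(x+(k-1)\lambda)$; $(x)_0=1$, $(x)_k=x(x-1)\cdots(x-k+1)$. The degenerate Stirling numbers of the first kind $S_{1,\lambda}(n,k)$ are defined by $(x)_{n}=\sum_{k=0}^{n}S_{1,\lambda}(n,k)(x)_{k,\lambda}$ for $n\ge 0$; equivalently $\frac{1}{k!}(\log_\lambda(1+t))^k=\sum_{n\ge k}S_{1,\lambda}(n,k)\frac{t^n}{n!}$ with $\log_\lambda(1+t)=\sum_{k\ge1}\lambda^{k-1}(1)_{k,1/\lambda}t^k/k!=((1+t)^\lambda-1)/\lambda$. The degenerate harmonic numbers are $H_{0,\lambda}=0$, $H_{n,\lambda}=\sum_{k=1}^{n}\frac{1}{\lambda}\binom{\lambda}{k}(-1)^{k-1}$ for $n\ge1$; the degenerate hyperharmonic numbers are $H_{n,\lambda}^{(1)}=H_{n,\lambda}$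 and $H_{n,\lambda}^{(r)}=\sum_{k=1}^{n}H_{k,\lambda}^{(r-1)}$ for $r\ge2$. *)

theory Defs
  imports Complex_Main "HOL-Computational_Algebra.Formal_Power_Series"
begin

definition dfall :: "real \<Rightarrow> real \<Rightarrow> nat \<Rightarrow> real" where
  "dfall l x k = (\<Prod>i<k. x - real i * l)"

definition drise :: "real \<Rightarrow> real \<Rightarrow> nat \<Rightarrow> real" where
  "drise l x k = (\<Prod>i<k. x + real i * l)"

text \<open>Degenerate logarithm log_lambda(1+t) as a formal power series:
  coefficient of t^k is lambda^(k-1) (1)_{k,1/lambda} / k! for k >= 1.\<close>
definition dlog_fps :: "real \<Rightarrow> real fps" where
  "dlog_fps l = Abs_fps (\<lambda>k. if k = 0 then 0
       else l ^ (k - 1) * dfall (1 / l) 1 k / fact k)"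

definition dstirling1 :: "real \<Rightarrow> nat \<Rightarrow> nat \<Rightarrow> real" where
  "dstirling1 l n k = fact n * fps_nth (dlog_fps l ^ k / fact k) n"

definition dharm :: "real \<Rightarrow> nat \<Rightarrow> real" where
  "dharm l n = (\<Sum>k=1..n. (1 / l) * (l gchoose k) * (-1) ^ (k - 1))"

text \<open>Degenerate hyperharmonic numbers H^{(r)}_{n,lambda} for r >= 1
  (the value at r = 0 is an irrelevant filler).\<close>
fun dhyper :: "real \<Rightarrow> nat \<Rightarrow> nat \<Rightarrow> real" where
  "dhyper l 0 n = 0"
| "dhyper l (Suc 0) n = dharm l n"
| "dhyper l (Suc (Suc r)) n = (\<Sum>k=1..n. dhyper l (Suc r) k)"

end

theory Submission
  imports Defs
begin
unbundle fps_syntax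


definition negx :: "real fps \<Rightarrow> real fps" where
  "negx f = Abs_fps (\<lambda>n. (-1)^n * f $ n)"

lemma negx_mult: "negx (a * b) = negx a * negx b"
proof (rule fps_ext)
  fix n
  have "negx (a*b) $ n = (\<Sum>i=0..n. (-1)^n * (a $ i * b $ (n-i)))"
    by (simp add: negx_def fps_mult_nth sum_distrib_left)
  also have "\<dots> = (\<Sum>i=0..n. ((-1)^i * a $ i) * ((-1)^(n-i) * b $ (n-i)))"
  proof (rule sum.cong[OF refl])
    fix i assume "i \<in> {0..n}"
    then have "(-1::real)^n = (-1)^i * (-1)^(n-i)" by (simp flip: power_add)
    then show "(-1)^n * (a $ i * b $ (n-i)) = ((-1)^i * a $ i) * ((-1)^(n-i) * b $ (n-i))" by simp
  qed
  also have "\<dots> = (negx a * negx b) $ n" by (simp add: negx_def fps_mult_nth)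
  finally show "negx (a*b) $ n = (negx a * negx b) $ n" .
qed

lemma negx_power: "negx (a ^ k) = negx a ^ k"
proof (induction k)
  case 0 show ?case by (simp add: negx_def fps_eq_iff)
next
  case (Suc k) then show ?case by (simp add: negx_mult)
qed

definition U :: "real \<Rightarrow> real fps" where
  "U l = Abs_fps (\<lambda>n. if n = 0 then 0 else - ((-1)^n * (l gchoose n)) / l)"

lemma U0[simp]: "U l $ 0 = 0" by (simp add: U_def)

lemma dlog_eq: assumes "l \<noteq> 0"
  shows "dlog_fps l = Abs_fps (\<lambda>k. if k = 0 then 0 else (l gchoose k) / l)"
proof (rule fps_ext)
  fix k :: nat
  show "dlog_fps l $ k = Abs_fps (\<lambda>k. if k = 0 then 0 else (l gchoose k) / l) $ k"
  proof (cases k)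
    case 0 then show ?thesis by (simp add: dlog_fps_def)
  next
    case (Suc m)
    have "l ^ k * dfall (1/l) 1 k = (\<Prod>i<k. l * (1 - real i * (1/l)))"
      by (simp add: dfall_def prod.distrib)
    also have "\<dots> = (\<Prod>i<k. l - real i)"
      using assms by (intro prod.cong) (auto simp: field_simps)
    also have "\<dots> = fact k * (l gchoose k)"
      by (simp add: gbinomial_mult_fact atLeast0LessThan)
    finally have *: "l ^ k * dfall (1/l) 1 k = fact k * (l gchoose k)" .
    have "l ^ (k-1) * dfall (1/l) 1 k = (l ^ k * dfall (1/l) 1 k) / l"
      using assms Suc by (simp add: field_simps)
    also have "\<dots> = fact k * ((l gchoose k) / l)" using * by simp
    finally have "l ^ (k-1) * dfall (1/l) 1 k / fact k = (l gchoose k) / l" by simp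
    then show ?thesis using Suc by (simp add: dlog_fps_def)
  qed
qed

lemma negx_dlog: assumes "l \<noteq> 0" shows "negx (dlog_fps l) = - U l"
  using assms by (auto simp: fps_eq_iff negx_def U_def dlog_eq)

lemma stirling_U: assumes "l \<noteq> 0" "k \<le> n"
  shows "(-1)^(n-k) * dstirling1 l n k = fact n / fact k * (U l ^ k) $ n"
proof -
  have fk: "(fact k :: real fps) = fps_const (fact k)"
    by (metis fps_of_nat of_nat_fact)
  have m1: "(- 1 :: real fps) ^ k = fps_const ((-1)^k)"
    by (simp flip: fps_const_power fps_const_neg)
  have "negx (dlog_fps l ^ k) $ n = ((- U l) ^ k) $ n"
    using assms by (simp add: negx_power negx_dlog)
  then have "(-1)^n * (dlog_fps l ^ k) $ n = (-1)^k * (U l ^ k) $ n"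
    using m1 by (simp add: negx_def power_minus[of "U l"])
  then have "(dlog_fps l ^ k) $ n = (-1)^n * (-1)^k * (U l ^ k) $ n"
  proof -
    assume h: "(-1)^n * (dlog_fps l ^ k) $ n = (-1)^k * (U l ^ k) $ n"
    have nn: "(-1::real)^n * (-1)^n = 1" by (simp flip: power_add)
    have "(dlog_fps l ^ k) $ n = (-1)^n * ((-1)^n * (dlog_fps l ^ k) $ n)"
      using nn by (simp add: mult.assoc[symmetric])
    then show ?thesis using h by simp
  qed
  moreover have "(-1::real)^(n-k) * ((-1)^n * (-1)^k) = 1"
  proof -
    have a: "(-1::real)^(n-k) * (-1)^k = (-1)^n" using assms by (simp flip: power_add)
    have nn: "(-1::real)^n * (-1)^n = 1" by (simp flip: power_add)
    have "(-1::real)^(n-k) * ((-1)^n * (-1)^k) = ((-1)^(n-k) * (-1)^k) * (-1)^n"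
      by (simp only: mult_ac)
    then show ?thesis using a nn by simp
  qed
  ultimately show ?thesis
    by (simp add: dstirling1_def fk field_simps)
qed


definition C :: "real \<Rightarrow> real \<Rightarrow> real fps" where
  "C l r = Abs_fps (\<lambda>j. drise l r j / fact j)"

lemma drise_Suc: "drise l r (Suc j) = drise l r j * (r + real j * l)"
  by (simp add: drise_def)

lemma C_ode: "(1 - fps_const l * fps_X) * fps_deriv (C l r) = fps_const r * C l r"
proof (rule fps_ext)
  fix n
  have e: "(1 - fps_const l * fps_X) * fps_deriv (C l r) = fps_deriv (C l r) - fps_const l * (fps_X * fps_deriv (C l r))"
    by (simp add: algebra_simps)
  show "((1 - fps_const l * fps_X) * fps_deriv (C l r)) $ n = (fps_const r * C l r) $ n"
  proof (cases n)
    case 0 then show ?thesis by (simp add: e C_def drise_def)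
  next
    case (Suc m)
    have f2: "fact (Suc (Suc m)) = real (Suc (Suc m)) * fact (Suc m)" by simp
    have f1: "fact (Suc m) = real (Suc m) * fact m" by simp
    have "real (Suc (Suc m)) * (drise l r (Suc (Suc m)) / fact (Suc (Suc m))) -
          l * (real (Suc m) * (drise l r (Suc m) / fact (Suc m))) = r * (drise l r (Suc m) / fact (Suc m))"
    proof -
      have ab: "p * (a * (r + q * l) / (p * F)) - l * (q * (a / F)) = r * (a / F)"
        if "p \<noteq> 0" "F \<noteq> 0" for p q a F :: real
        using that by (simp add: field_simps)
      show ?thesis unfolding f2 drise_Suc[of l r "Suc m"]
        by (rule ab) auto
    qed
    then show ?thesis using Suc unfolding e by (simp add: C_def fps_deriv_nth del: of_nat_Suc fact_Suc)
  qed
qed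

lemma gch: "real (Suc k) * (l gchoose Suc k) = (l - real k) * (l gchoose k)"
  by (simp only: gbinomial_absorption gbinomial_absorb_comp)

lemma U_ode: assumes "l \<noteq> 0" shows "(1 - fps_X) * fps_deriv (U l) = 1 - fps_const l * U l"
proof (rule fps_ext)
  fix n
  have e: "(1 - fps_X) * fps_deriv (U l) = fps_deriv (U l) - fps_X * fps_deriv (U l)"
    by (simp add: algebra_simps)
  show "((1 - fps_X) * fps_deriv (U l)) $ n = (1 - fps_const l * U l) $ n"
  proof (cases n)
    case 0 then show ?thesis using assms by (simp add: e U_def fps_deriv_nth)
  next
    case (Suc m)
    have g: "real (Suc (Suc m)) * (l gchoose Suc (Suc m)) + real (Suc m) * (l gchoose Suc m) = l * (l gchoose Suc m)"
      unfolding gch[of "Suc m"] by (simp add: algebra_simps)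
    have "real (Suc (Suc m)) * (- ((-1) ^ Suc (Suc m) * (l gchoose Suc (Suc m))) / l)
        - real (Suc m) * (- ((-1) ^ Suc m * (l gchoose Suc m)) / l)
        = - (l * (- ((-1) ^ Suc m * (l gchoose Suc m)) / l))"
    proof -
      have "real (Suc (Suc m)) * (- ((-1) ^ Suc (Suc m) * (l gchoose Suc (Suc m))) / l)
        - real (Suc m) * (- ((-1) ^ Suc m * (l gchoose Suc m)) / l)
        = (-1) ^ Suc m * (real (Suc (Suc m)) * (l gchoose Suc (Suc m)) + real (Suc m) * (l gchoose Suc m)) / l"
      proof -
        have ab: "p * (- (s * x) / l) - q * (- (t * y) / l) = t * (p * x + q * y) / l"
          if "s = - t" for p q x y s t :: real
          using that assms by (simp add: field_simps)
        show ?thesis by (rule ab) simp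
      qed
      also have "\<dots> = (-1) ^ Suc m * (l * (l gchoose Suc m)) / l" by (simp only: g)
      also have "\<dots> = (-1) ^ Suc m * (l gchoose Suc m)" using assms by simp
      finally show ?thesis using assms by simp
    qed
    then show ?thesis using Suc assms unfolding e by (simp add: U_def fps_deriv_nth del: of_nat_Suc power_Suc)
  qed
qed



lemma key: assumes "l \<noteq> 0"
  shows "(1 - fps_X) ^ r * (C l (real r) oo U l) = 1"
proof -
  define F where "F = C l (real r) oo U l"
  have dF: "fps_deriv F = (fps_deriv (C l (real r)) oo U l) * fps_deriv (U l)"
    unfolding F_def by (rule fps_compose_deriv) simp
  have comp1: "(1 - fps_const l * fps_X) oo U l = 1 - fps_const l * U l"
    by (simp add: fps_compose_sub_distrib fps_compose_mult_distrib)
  have odeF: "(1 - fps_X) * fps_deriv F = fps_const (real r) * F"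
  proof -
    have "(1 - fps_X) * fps_deriv F = (fps_deriv (C l (real r)) oo U l) * ((1 - fps_X) * fps_deriv (U l))"
      by (simp add: dF mult_ac)
    also have "\<dots> = (fps_deriv (C l (real r)) oo U l) * ((1 - fps_const l * fps_X) oo U l)"
      by (simp add: U_ode[OF assms] comp1)
    also have "\<dots> = ((1 - fps_const l * fps_X) * fps_deriv (C l (real r))) oo U l"
      by (simp add: fps_compose_mult_distrib mult.commute)
    also have "\<dots> = fps_const (real r) * F"
      by (simp add: C_ode F_def fps_compose_mult_distrib)
    finally show ?thesis .
  qed
  define H where "H = (1 - fps_X) ^ r * F"
  have d1: "fps_deriv ((1 - fps_X :: real fps) ^ r) = fps_const (- real r) * (1 - fps_X) ^ (r - 1)"
    by (simp add: fps_deriv_power)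
  have p: "fps_const (real r) * ((1 - fps_X) * (1 - fps_X :: real fps) ^ (r - 1)) = fps_const (real r) * (1 - fps_X) ^ r"
    by (cases r) simp_all
  have "(1 - fps_X) * fps_deriv H = (1 - fps_X) * (fps_deriv ((1 - fps_X) ^ r) * F + (1 - fps_X) ^ r * fps_deriv F)"
    unfolding H_def by simp
  also have "\<dots> = - (fps_const (real r) * ((1 - fps_X) * (1 - fps_X) ^ (r - 1))) * F + (1 - fps_X) ^ r * ((1 - fps_X) * fps_deriv F)"
  proof -
    have ab: "x * ((-c) * P * F + Q * D) = -(c * (x * P)) * F + Q * (x * D)" for x c P F Q D :: "real fps"
      by (simp add: algebra_simps)
    have n: "fps_const (- real r) = - fps_const (real r)" by (rule fps_ext) simp
    show ?thesis unfolding d1 n by (rule ab)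
  qed
  also have "\<dots> = 0" unfolding p odeF by (simp add: algebra_simps)
  finally have "(1 - fps_X) * fps_deriv H = 0" .
  moreover have "(1 - fps_X :: real fps) \<noteq> 0"
  proof
    assume "(1 - fps_X :: real fps) = 0"
    then have "(1 - fps_X :: real fps) $ 0 = 0" by simp
    then show False by simp
  qed
  ultimately have "fps_deriv H = 0" by simp
  then have "H = fps_const (H $ 0)" by simp
  moreover have "H $ 0 = 1" unfolding H_def F_def by (simp add: C_def drise_def fps_power_zeroth)
  ultimately show ?thesis unfolding H_def F_def by simp
qed



definition ones :: "real fps" where "ones = Abs_fps (\<lambda>_. 1)"

lemma ones_inv: "ones * (1 - fps_X) = 1"
proof (rule fps_ext)
  fix n
  have "ones * (1 - fps_X) = ones - fps_X * ones" by (simp add: algebra_simps)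
  then show "(ones * (1 - fps_X)) $ n = (1::real fps) $ n"
    by (cases n) (simp_all add: ones_def)
qed

lemma CU: assumes "l \<noteq> 0" shows "C l (real r) oo U l = ones ^ r"
proof -
  have "ones ^ r = ones ^ r * ((1 - fps_X) ^ r * (C l (real r) oo U l))"
    using key[OF assms] by simp
  also have "\<dots> = (ones * (1 - fps_X)) ^ r * (C l (real r) oo U l)"
    by (simp add: power_mult_distrib mult.assoc)
  finally show ?thesis by (simp add: ones_inv)
qed

lemma mult_ones_nth: "(f * ones) $ n = (\<Sum>i=0..n. f $ i)"
  by (simp add: fps_mult_nth ones_def)

lemma sum0: "f 0 = (0::real) \<Longrightarrow> (\<Sum>i=0..(n::nat). f i) = (\<Sum>i=1..n. f i)"
proof -
  assume "f 0 = 0"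
  moreover have "{0..n} = insert 0 {1..n}" by auto
  ultimately show ?thesis by simp
qed

lemma hyp: assumes "l \<noteq> 0" shows "dhyper l (Suc q) n = (U l * ones ^ Suc q) $ n"
proof (induction q arbitrary: n)
  case 0
  have "(U l * ones) $ n = (\<Sum>i=1..n. U l $ i)"
    by (simp add: mult_ones_nth sum0)
  also have "\<dots> = dharm l n" unfolding dharm_def
  proof (rule sum.cong[OF refl])
    fix k assume "k \<in> {1..n}"
    then obtain j where k: "k = Suc j" by (cases k) auto
    show "U l $ k = 1 / l * (l gchoose k) * (-1) ^ (k - 1)"
      using k by (simp add: U_def)
  qed
  finally show ?case by simp
next
  case (Suc q)
  have "dhyper l (Suc (Suc q)) n = (\<Sum>k=1..n. (U l * ones ^ Suc q) $ k)"
    by (simp add: Suc)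
  also have "\<dots> = (\<Sum>k=0..n. (U l * ones ^ Suc q) $ k)"
    by (rule sum0[symmetric]) simp
  also have "\<dots> = (U l * ones ^ Suc q * ones) $ n" by (simp add: mult_ones_nth)
  also have "\<dots> = (U l * ones ^ Suc (Suc q)) $ n" by (simp add: mult_ac)
  finally show ?case .
qed

lemma compose_ext: fixes A B :: "real fps" assumes "B $ 0 = 0" "m \<le> N"
  shows "(A oo B) $ m = (\<Sum>j=0..N. A $ j * (B ^ j) $ m)"
  unfolding fps_compose_nth
  by (rule sum.mono_neutral_left) (use assms startsby_zero_power_prefix[OF assms(1)] in auto)

lemma UCU: fixes A B :: "real fps" assumes "B $ 0 = 0"
  shows "(B * (A oo B)) $ n = (\<Sum>j=0..n. A $ j * (B ^ Suc j) $ n)"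
proof -
  have "(B * (A oo B)) $ n = (\<Sum>i=0..n. B $ i * (\<Sum>j=0..n. A $ j * (B ^ j) $ (n - i)))"
    unfolding fps_mult_nth
  proof (intro sum.cong refl)
    fix i assume "i \<in> {0..n}"
    then show "B $ i * (A oo B) $ (n - i) = B $ i * (\<Sum>j=0..n. A $ j * (B ^ j) $ (n - i))"
      using compose_ext[OF assms, of "n - i" n A] by simp
  qed
  also have "\<dots> = (\<Sum>j=0..n. A $ j * (\<Sum>i=0..n. B $ i * (B ^ j) $ (n - i)))"
    unfolding sum_distrib_left
    by (subst sum.swap) (rule sum.cong[OF refl], rule sum.cong[OF refl], simp only: ac_simps)
  also have "\<dots> = (\<Sum>j=0..n. A $ j * (B ^ Suc j) $ n)"
    by (simp add: fps_mult_nth)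
  finally show ?thesis .
qed



lemma main:
  fixes l :: real and n r :: nat
  assumes l: "l \<noteq> 0" and n: "n \<ge> 1" and r: "r \<ge> 1"
  shows "dhyper l r n = 1 / fact n *
           (\<Sum>k=1..n. (-1) ^ (n - k) * drise l (real r) (k - 1) * real k * dstirling1 l n k)"
proof -
  obtain q where rq: "r = Suc q" using r by (cases r) auto
  obtain m where nm: "n = Suc m" using n by (cases n) auto
  have "dhyper l r n = (U l * (C l (real r) oo U l)) $ n"
    using hyp[OF l, of q n] CU[OF l, of r] rq by simp
  also have "\<dots> = (\<Sum>j=0..n. C l (real r) $ j * (U l ^ Suc j) $ n)"
    by (rule UCU) simp
  also have "\<dots> = (\<Sum>j=0..m. C l (real r) $ j * (U l ^ Suc j) $ n)"
    using startsby_zero_power_prefix[of "U l" "Suc n"] nm by simp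
  also have "\<dots> = (\<Sum>k=Suc 0..Suc m. C l (real r) $ (k - 1) * (U l ^ k) $ n)"
    by (subst sum.shift_bounds_cl_Suc_ivl) simp
  also have "\<dots> = (\<Sum>k=1..n. 1 / fact n * ((-1) ^ (n - k) * drise l (real r) (k - 1) * real k * dstirling1 l n k))"
  proof (rule sum.cong)
    show "{Suc 0..Suc m} = {1..n}" using nm by simp
  next
    fix k assume k: "k \<in> {1..n}"
    then obtain i where ki: "k = Suc i" by (cases k) auto
    have st: "(-1)^(n-k) * dstirling1 l n k = fact n / fact k * (U l ^ k) $ n"
      using stirling_U[OF l] k by simp
    have fk: "fact k = real k * fact i" using ki by simp
    have "1 / fact n * ((-1) ^ (n - k) * drise l (real r) (k - 1) * real k * dstirling1 l n k)
        = 1 / fact n * (drise l (real r) (k - 1) * real k * ((-1)^(n-k) * dstirling1 l n k))"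
      by (simp only: ac_simps)
    also have "\<dots> = drise l (real r) i / fact i * (U l ^ k) $ n"
    proof -
      have ab: "1 / N * (d * K * (N / (K * F) * P)) = d / F * P"
        if "N \<noteq> 0" "K \<noteq> 0" "F \<noteq> 0" for N K F d P :: real
        using that by (simp add: field_simps)
      have ki1: "k - 1 = i" using ki by simp
      show ?thesis unfolding st fk ki1 by (rule ab) (use ki in auto)
    qed
    finally show "C l (real r) $ (k - 1) * (U l ^ k) $ n = 1 / fact n * ((-1) ^ (n - k) * drise l (real r) (k - 1) * real k * dstirling1 l n k)"
      using ki by (simp add: C_def)
  qed
  also have "\<dots> = 1 / fact n *
           (\<Sum>k=1..n. (-1) ^ (n - k) * drise l (real r) (k - 1) * real k * dstirling1 l n k)"
    by (simp add: sum_distrib_left)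
  finally show ?thesis .
qed

theorem theorem3:
  fixes l :: real and n r :: nat
  assumes "l \<noteq> 0" and "n \<ge> 1" and "r \<ge> 1"
  shows "dhyper l r n = 1 / fact n *
           (\<Sum>k=1..n. (-1) ^ (n - k) * drise l (real r) (k - 1) * real k * dstirling1 l n k)
       \<and> dharm l n = 1 / fact n *
           (\<Sum>k=1..n. (-1) ^ (n - k) * real k * drise l 1 (k - 1) * dstirling1 l n k)"
proof
  show "dhyper l r n = 1 / fact n *
           (\<Sum>k=1..n. (-1) ^ (n - k) * drise l (real r) (k - 1) * real k * dstirling1 l n k)"
    by (rule main) (use assms in auto)
  have "dhyper l 1 n = 1 / fact n *
           (\<Sum>k=1..n. (-1) ^ (n - k) * drise l (real 1) (k - 1) * real k * dstirling1 l n k)"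
    by (rule main) (use assms in auto)
  then show "dharm l n = 1 / fact n *
           (\<Sum>k=1..n. (-1) ^ (n - k) * real k * drise l 1 (k - 1) * dstirling1 l n k)"
    by (simp add: ac_simps)
qed

end
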